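(* Consider a discrete-time system $x_{k+1}=A_kx_k+b_ku_k$, $y_k=c_kx_k$ ($k\in\mathbb{Z}$), $c_k\in\mathbb{R}^{1\times n}$, which is in controller canonical form and completely observable, and such that for every $k\in\mathbb{N}$ the first coordinate of $c_k$ is nonzero (i.e. $c_k(1,0,\dots,0)^T\neq0$). Then there is $N\in\mathbb{N}$ such that for every initial state $x_0\in\mathbb{R}^n$ there are scalars $F_0,F_1,\dots,F_N$ such that the feedback $u_k=F_ky_k$ (i.e. the dynamics $x_{k+1}=(A_k+F_kb_kc_k)x_k$) yields $x_N=0$.
   Context: Controller canonical form: for every $k$, $b_k=(0,\dots,0,1)^T$ and $A_k\in\mathbb{R}^{n\times n}$ has ones on the superdiagonal (entries $(i,i+1)$, $1\le i\le n-1$), zeros elsewhere in its first $n-1$ rows, and an arbitrary last row $(\alpha_{k,1},\dots,\alpha_{k,n})$. Complete observability: for every $k\in\mathbb{Z}$ and all controls $u_k,\dots,u_{k+n-2}$, the state $x_k$ is uniquely determined by $y_k,\dots,y_{k+n-1}$. *)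

theory Defs
  imports "Jordan_Normal_Form.Matrix"
begin

text \<open>The row vector c k is represented as a vector of dimension n.\<close>

definition ccf :: "nat \<Rightarrow> real mat \<Rightarrow> real vec \<Rightarrow> bool" where
  "ccf n A b \<longleftrightarrow> A \<in> carrier_mat n n \<and> b = unit_vec n (n - 1) \<and>
     (\<forall>i<n - 1. \<forall>j<n. A $$ (i, j) = (if j = i + 1 then 1 else 0))"

fun traj :: "(int \<Rightarrow> real mat) \<Rightarrow> (int \<Rightarrow> real vec) \<Rightarrow> int \<Rightarrow> real vec \<Rightarrow> (int \<Rightarrow> real) \<Rightarrow> nat \<Rightarrow> real vec" where
  "traj A b k x u 0 = x"
| "traj A b k x u (Suc j) = A (k + int j) *\<^sub>v traj A b k x u j + u (k + int j) \<cdot>\<^sub>v b (k + int j)"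

definition completely_observable :: "nat \<Rightarrow> (int \<Rightarrow> real mat) \<Rightarrow> (int \<Rightarrow> real vec) \<Rightarrow> (int \<Rightarrow> real vec) \<Rightarrow> bool" where
  "completely_observable n A b c \<longleftrightarrow>
     (\<forall>k u x x'. x \<in> carrier_vec n \<longrightarrow> x' \<in> carrier_vec n \<longrightarrow>
        (\<forall>j<n. c (k + int j) \<bullet> traj A b k x u j = c (k + int j) \<bullet> traj A b k x' u j) \<longrightarrow> x = x')"

fun closed_loop :: "(int \<Rightarrow> real mat) \<Rightarrow> (int \<Rightarrow> real vec) \<Rightarrow> (int \<Rightarrow> real vec) \<Rightarrow> (nat \<Rightarrow> real) \<Rightarrow> real vec \<Rightarrow> nat \<Rightarrow> real vec" where
  "closed_loop A b c F x0 0 = x0"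
| "closed_loop A b c F x0 (Suc k) =
     A (int k) *\<^sub>v closed_loop A b c F x0 k + (F k * (c (int k) \<bullet> closed_loop A b c F x0 k)) \<cdot>\<^sub>v b (int k)"

end

theory Submission
  imports Defs "HOL-Library.Function_Algebras"
begin


definition sc :: "real \<Rightarrow> (nat \<Rightarrow> real) \<Rightarrow> (nat \<Rightarrow> real)" where
  "sc r f = (\<lambda>i. r * f i)"

lemma sc_apply[simp]: "sc r f i = r * f i" by (simp add: sc_def)

interpretation fv: vector_space sc
  by unfold_locales (auto simp: sc_def fun_eq_iff algebra_simps)

lemma fv_module: "Modules.module sc"
  using fv.vector_space_axioms module_iff_vector_space by blast

definition lfun :: "((nat \<Rightarrow> real) \<Rightarrow> real) \<Rightarrow> bool" where
  "lfun l \<longleftrightarrow> (\<forall>x y. l (x + y) = l x + l y) \<and> (\<forall>r x. l (sc r x) = r * l x)"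

lemma lfun_zero: assumes "lfun l" shows "l 0 = 0"
proof -
  have "l (sc 0 0) = 0 * l 0" using assms unfolding lfun_def by blast
  moreover have "sc 0 0 = (0::nat\<Rightarrow>real)" by (simp add: sc_def fun_eq_iff)
  ultimately show ?thesis by simp
qed

lemma lfun_sum: assumes "lfun l" "finite S" shows "l (\<Sum>v\<in>S. g v) = (\<Sum>v\<in>S. l (g v))"
  using assms(2)
proof (induction S rule: finite_induct)
  case empty then show ?case using lfun_zero[OF assms(1)] by (simp only: sum.empty)
next
  case (insert x F)
  have "l (g x + sum g F) = l (g x) + l (sum g F)" using assms(1) unfolding lfun_def by blast
  then show ?case using insert by (simp only: sum.insert[OF insert.hyps(1,2)])
qed

lemma subspace_ker: assumes "lfun l" shows "fv.subspace {x. l x = 0}"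
proof -
  have "l 0 = 0" using lfun_zero[OF assms] .
  then show ?thesis using assms unfolding fv.subspace_def lfun_def by auto
qed

lemma lfun_span_zero: assumes "lfun l" "\<forall>s\<in>S. l s = 0" "x \<in> fv.span S" shows "l x = 0"
  using fv.span_induct[OF assms(3) subspace_ker[OF assms(1)]] assms(2) by auto

lemma lfun_span_nz: assumes "lfun l" "x \<in> fv.span S" "l x \<noteq> 0" shows "\<exists>s\<in>S. l s \<noteq> 0"
  using lfun_span_zero[OF assms(1) _ assms(2)] assms(3) by blast

lemma biorth_indep:
  assumes fin: "finite S"
    and bi: "\<And>t. t \<in> S \<Longrightarrow> \<exists>l. lfun l \<and> l t \<noteq> 0 \<and> (\<forall>s\<in>S. s \<noteq> t \<longrightarrow> l s = 0)"
  shows "fv.independent S"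
  unfolding fv.independent_explicit_finite_subsets
proof (intro allI impI ballI)
  fix S' u v assume S': "S' \<subseteq> S" "finite S'" and sum0: "(\<Sum>v\<in>S'. sc (u v) v) = 0" and v: "v \<in> S'"
  obtain l where l: "lfun l" "l v \<noteq> 0" "\<forall>s\<in>S. s \<noteq> v \<longrightarrow> l s = 0" using bi[of v] v S' by blast
  have "0 = l (\<Sum>w\<in>S'. sc (u w) w)" using sum0 lfun_zero[OF l(1)] by simp
  also have "\<dots> = (\<Sum>w\<in>S'. u w * l w)" using lfun_sum[OF l(1) S'(2)] l(1) unfolding lfun_def by simp
  also have "\<dots> = u v * l v + (\<Sum>w\<in>S'-{v}. u w * l w)"
    using sum.remove[OF S'(2) v] by simp
  also have "(\<Sum>w\<in>S'-{v}. u w * l w) = 0"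
    using S'(1) l(3) by (intro sum.neutral) auto
  finally have "0 = u v * l v" by simp
  then show "u v = 0" using l(2) by simp
qed

definition fd :: "(nat \<Rightarrow> real) set \<Rightarrow> bool" where
  "fd V \<longleftrightarrow> (\<exists>E. finite E \<and> V \<subseteq> fv.span E)"

lemma basis_fin:
  assumes "fd V"
  obtains B where "B \<subseteq> V" "fv.independent B" "V \<subseteq> fv.span B" "card B = fv.dim V" "finite B"
proof -
  obtain E where E: "finite E" "V \<subseteq> fv.span E" using assms fd_def by blast
  obtain B where B: "B \<subseteq> V" "fv.independent B" "V \<subseteq> fv.span B" "card B = fv.dim V"
    using fv.basis_exists by blast
  have "finite B" using fv.independent_span_bound[OF E(1) B(2)] B(1) E(2) by blast
  then show ?thesis using B that by blast
qed

lemma indep_card_le_dim: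
  assumes "fd V" "fv.independent B" "B \<subseteq> V"
  shows "finite B \<and> card B \<le> fv.dim V"
proof -
  obtain C where C: "C \<subseteq> V" "fv.independent C" "V \<subseteq> fv.span C" "card C = fv.dim V" "finite C"
    using basis_fin[OF assms(1)] by blast
  show ?thesis using fv.independent_span_bound[OF C(5) assms(2)] assms(3) C(3,4) by auto
qed

lemma indep_image:
  assumes lin: "\<And>x y. f (x + y) = f x + f y" "\<And>r x. f (sc r x) = sc r (f x)"
    and ind: "fv.independent B" and inj: "inj_on f (fv.span B)"
  shows "fv.independent (f ` B)"
proof -
  have "Modules.module_hom sc sc f" unfolding Modules.module_hom_iff using fv_module lin by blast
  then show ?thesis using Modules.module_hom.independent_injective_image ind inj by blast
qed



definition dot :: "nat \<Rightarrow> (nat \<Rightarrow> real) \<Rightarrow> (nat \<Rightarrow> real) \<Rightarrow> real" where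
  "dot n \<phi> z = (\<Sum>i<n. \<phi> i * z i)"

definition Sh :: "nat \<Rightarrow> (nat \<Rightarrow> real) \<Rightarrow> (nat \<Rightarrow> real)" where
  "Sh n z = (\<lambda>i. if i + 1 < n then z (i + 1) else 0)"

definition en :: "nat \<Rightarrow> (nat \<Rightarrow> real)" where
  "en n = (\<lambda>i. if i = n - 1 then 1 else 0)"

definition e0 :: "nat \<Rightarrow> real" where
  "e0 = (\<lambda>i. if i = 0 then 1 else 0)"

definition uv :: "nat \<Rightarrow> nat \<Rightarrow> real" where
  "uv k = (\<lambda>i. if i = k then 1 else 0)"

definition Am :: "nat \<Rightarrow> (nat \<Rightarrow> nat \<Rightarrow> real) \<Rightarrow> nat \<Rightarrow> (nat \<Rightarrow> real) \<Rightarrow> (nat \<Rightarrow> real)" where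
  "Am n al k z = Sh n z + sc (dot n (al k) z) (en n)"

fun ol :: "nat \<Rightarrow> (nat \<Rightarrow> nat \<Rightarrow> real) \<Rightarrow> nat \<Rightarrow> (nat \<Rightarrow> real) \<Rightarrow> nat \<Rightarrow> (nat \<Rightarrow> real)" where
  "ol n al T z 0 = z"
| "ol n al T z (Suc j) = Am n al (T + j) (ol n al T z j)"

definition supp :: "nat \<Rightarrow> (nat \<Rightarrow> real) \<Rightarrow> bool" where
  "supp n z \<longleftrightarrow> (\<forall>i\<ge>n. z i = 0)"

definition step :: "nat \<Rightarrow> (nat \<Rightarrow> nat \<Rightarrow> real) \<Rightarrow> (nat \<Rightarrow> nat \<Rightarrow> real) \<Rightarrow> nat
   \<Rightarrow> (nat \<Rightarrow> real) \<Rightarrow> (nat \<Rightarrow> real) \<Rightarrow> bool" where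
  "step n al cc k x x' \<longleftrightarrow>
     (\<exists>v. x' = Sh n x + sc v (en n) \<and> (dot n (cc k) x = 0 \<longrightarrow> v = dot n (al k) x))"

lemma dot_add: "dot n \<phi> (x + y) = dot n \<phi> x + dot n \<phi> y"
  by (simp add: dot_def algebra_simps sum.distrib)
lemma dot_sc: "dot n \<phi> (sc r x) = r * dot n \<phi> x"
  by (simp add: dot_def sum_distrib_left algebra_simps)
lemma dot_zero[simp]: "dot n \<phi> 0 = 0"
  by (simp add: dot_def)
lemma lfun_dot: "lfun (dot n \<phi>)"
  unfolding lfun_def using dot_add dot_sc by blast

lemma Sh_add: "Sh n (x + y) = Sh n x + Sh n y"
  by (simp add: Sh_def fun_eq_iff)
lemma Sh_sc: "Sh n (sc r x) = sc r (Sh n x)"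
  by (simp add: Sh_def fun_eq_iff)
lemma Sh_zero[simp]: "Sh n 0 = 0"
  by (simp add: Sh_def fun_eq_iff)
lemma sc_add: "sc r (x + y) = sc r x + sc r y"
  by (simp add: fun_eq_iff algebra_simps)
lemma sc_add2: "sc (r + s) x = sc r x + sc s x"
  by (simp add: fun_eq_iff algebra_simps)
lemma sc_sc: "sc r (sc s x) = sc (r * s) x"
  by (simp add: fun_eq_iff algebra_simps)
lemma sc_zero[simp]: "sc 0 x = 0" "sc r 0 = 0"
  by (simp_all add: fun_eq_iff)
lemma Am_add: "Am n al k (x + y) = Am n al k x + Am n al k y"
  by (simp add: Am_def Sh_add dot_add fun_eq_iff algebra_simps)
lemma Am_sc: "Am n al k (sc r x) = sc r (Am n al k x)"
  by (simp add: Am_def Sh_sc dot_sc fun_eq_iff algebra_simps)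
lemma Am_zero[simp]: "Am n al k 0 = 0"
  by (simp add: Am_def)

lemma ol_add: "ol n al T (x + y) j = ol n al T x j + ol n al T y j"
  by (induction j) (simp_all only: ol.simps Am_add)
lemma ol_sc: "ol n al T (sc r x) j = sc r (ol n al T x j)"
  by (induction j) (simp_all only: ol.simps Am_sc)

lemma lfun_comp:
  assumes "lfun l" "\<And>x y. f (x + y) = f x + f y" "\<And>r x. f (sc r x) = sc r (f x)"
  shows "lfun (\<lambda>x. l (f x))"
  using assms unfolding lfun_def by simp

lemma subspace_supp: "fv.subspace {z. supp n z}"
  unfolding fv.subspace_def supp_def by auto

lemma supp_span: assumes "\<forall>s\<in>S. supp n s" "x \<in> fv.span S" shows "supp n x"
  using fv.span_induct[OF assms(2) subspace_supp] assms(1) by auto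

lemma supp_Sh: "supp n (Sh n x)" by (simp add: supp_def Sh_def)
lemma supp_en: "1 \<le> n \<Longrightarrow> supp n (en n)" by (simp add: supp_def en_def)
lemma supp_e0: "1 \<le> n \<Longrightarrow> supp n e0" by (simp add: supp_def e0_def)
lemma supp_add: "supp n x \<Longrightarrow> supp n y \<Longrightarrow> supp n (x + y)" by (simp add: supp_def)
lemma supp_sc: "supp n x \<Longrightarrow> supp n (sc r x)" by (simp add: supp_def)
lemma supp_Am: "1 \<le> n \<Longrightarrow> supp n (Am n al k x)"
  unfolding Am_def by (intro supp_add supp_Sh supp_sc supp_en)
lemma supp_zero[simp]: "supp n 0" by (simp add: supp_def)

lemma supp_sum_uv: assumes "supp n z" shows "z = (\<Sum>i<n. sc (z i) (uv i))"
proof (rule ext)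
  fix j
  have "(\<Sum>i<n. sc (z i) (uv i)) j = (\<Sum>i<n. z i * uv i j)"
    by (induction n) simp_all
  also have "\<dots> = (if j < n then z j else 0)"
    by (simp add: uv_def if_distrib sum.delta cong: if_cong)
  also have "\<dots> = z j" using assms by (simp add: supp_def)
  finally show "z j = (\<Sum>i<n. sc (z i) (uv i)) j" by simp
qed

lemma supp_in_span: assumes "supp n z" shows "z \<in> fv.span (uv ` {..<n})"
proof -
  have "(\<Sum>i<n. sc (z i) (uv i)) \<in> fv.span (uv ` {..<n})"
    by (intro fv.span_sum fv.span_scale fv.span_base) auto
  then show ?thesis using supp_sum_uv[OF assms] by simp
qed

lemma fd_supp: "\<forall>z\<in>V. supp n z \<Longrightarrow> fd V"
  unfolding fd_def using supp_in_span by blast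

lemma dim_le_n: assumes "\<forall>z\<in>V. supp n z" shows "fv.dim V \<le> n"
proof -
  have "fv.dim V \<le> card (uv ` {..<n})"
    using fv.dim_le_card[of V "uv ` {..<n}"] supp_in_span assms by blast
  also have "\<dots> \<le> n" using card_image_le[of "{..<n}" uv] by simp
  finally show ?thesis .
qed

lemma kernel_Sh: assumes "supp n z" "Sh n z = 0" shows "z = sc (z 0) e0"
proof (rule ext)
  fix i show "z i = sc (z 0) e0 i"
  proof (cases "i = 0")
    case True then show ?thesis by (simp add: e0_def)
  next
    case False
    show ?thesis
    proof (cases "i < n")
      case True
      then obtain j where j: "i = j + 1" "j + 1 < n" using False by (metis Suc_eq_plus1 not0_implies_Suc)
      have "Sh n z j = 0" using assms(2) by simp
      then show ?thesis using j False by (simp add: Sh_def e0_def)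
    next
      case False
      then show ?thesis using assms(1) \<open>i \<noteq> 0\<close> by (simp add: supp_def e0_def)
    qed
  qed
qed

lemma Am_zero_Sh: assumes "1 \<le> n" "Am n al k z = 0" shows "Sh n z = 0"
proof (rule ext)
  fix i
  have "Am n al k z i = 0" using assms(2) by simp
  then show "Sh n z i = 0 i"
    by (cases "i = n - 1") (auto simp: Am_def Sh_def en_def)
qed

lemma dot_e0: "1 \<le> n \<Longrightarrow> dot n \<phi> e0 = \<phi> 0"
  by (simp add: dot_def e0_def if_distrib sum.delta cong: if_cong)

lemma en_last: "1 \<le> n \<Longrightarrow> en n (n - 1) = 1" by (simp add: en_def)
lemma Sh_last: "Sh n x (n - 1) = 0" by (simp add: Sh_def)

lemma en_notin_span_Sh:
  assumes "1 \<le> n" shows "en n \<notin> fv.span (Sh n ` S)"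
proof
  assume "en n \<in> fv.span (Sh n ` S)"
  moreover have "fv.subspace {x. x (n - 1) = 0}" unfolding fv.subspace_def by simp
  ultimately have "en n (n - 1) = 0"
    using fv.span_induct[of "en n" "Sh n ` S" "\<lambda>x. x (n - 1) = 0"] Sh_last by auto
  then show False using en_last[OF assms] by simp
qed



declare plus_fun_apply[simp del] zero_fun_apply[simp del] sc_apply[simp del]

lemma subspace_image:
  assumes "fv.subspace V" "\<And>x y. f (x + y) = f x + f y" "\<And>r x. f (sc r x) = sc r (f x)"
  shows "fv.subspace (f ` V)"
proof -
  have f0: "f 0 = 0" using assms(3)[of 0 0] by simp
  show ?thesis unfolding fv.subspace_def
  proof (intro conjI ballI allI)
    show "0 \<in> f ` V" using f0 fv.subspace_0[OF assms(1)] by (metis image_eqI)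
  next
    fix x y assume "x \<in> f ` V" "y \<in> f ` V"
    then obtain a b where "a \<in> V" "b \<in> V" "x = f a" "y = f b" by blast
    then show "x + y \<in> f ` V" using assms(2)[of a b] fv.subspace_add[OF assms(1)] by (metis image_eqI)
  next
    fix c x assume "x \<in> f ` V"
    then obtain a where "a \<in> V" "x = f a" by blast
    then show "sc c x \<in> f ` V" using assms(3)[of c a] fv.subspace_scale[OF assms(1)] by (metis image_eqI)
  qed
qed

lemma sc_minus1: "sc (-1) y = - y" by (simp add: fun_eq_iff)

lemma inj_on_ker:
  assumes "fv.subspace V" "\<And>x y. f (x + y) = f x + f y" "\<And>r x. f (sc r x) = sc r (f x)"
    and ker: "\<And>z. z \<in> V \<Longrightarrow> f z = 0 \<Longrightarrow> z = 0"
  shows "inj_on f V"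
proof (rule inj_onI)
  fix x y assume xy: "x \<in> V" "y \<in> V" "f x = f y"
  have d: "x - y \<in> V" using xy fv.subspace_diff[OF assms(1)] by blast
  have "f x = f ((x - y) + y)" by simp
  also have "\<dots> = f (x - y) + f y" using assms(2) by blast
  finally have "f (x - y) = 0" using xy(3) by simp
  then have "x - y = 0" using ker d by blast
  then show "x = y" by simp
qed

lemma dim_image_ge:
  assumes fdV: "fd V" and fdV': "fd V'" and sV: "fv.subspace V"
    and lin: "\<And>x y. f (x + y) = f x + f y" "\<And>r x. f (sc r x) = sc r (f x)"
    and inj: "inj_on f V" and sub: "f ` V \<subseteq> V'"
  shows "fv.dim V \<le> fv.dim V'"
proof -
  obtain B where B: "B \<subseteq> V" "fv.independent B" "V \<subseteq> fv.span B" "card B = fv.dim V" "finite B"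
    using basis_fin[OF fdV] by blast
  have spB: "fv.span B = V" using fv.span_subspace[OF B(1) B(3) sV] .
  have ind: "fv.independent (f ` B)" using indep_image[OF lin B(2)] inj spB by simp
  have "card (f ` B) = card B" using card_image[OF inj_on_subset[OF inj B(1)]] .
  moreover have "card (f ` B) \<le> fv.dim V'" using indep_card_le_dim[OF fdV' ind] B(1) sub by blast
  ultimately show ?thesis using B(4) by simp
qed

locale sysl =
  fixes n :: nat and al :: "nat \<Rightarrow> nat \<Rightarrow> real" and cc :: "nat \<Rightarrow> nat \<Rightarrow> real"
  assumes n1: "1 \<le> n"
    and c0: "\<And>k. cc k 0 \<noteq> 0"
    and obs: "\<And>T z. supp n z \<Longrightarrow> (\<And>j. j < n \<Longrightarrow> dot n (cc (T + j)) (ol n al T z j) = 0) \<Longrightarrow> z = 0"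
begin

fun W :: "(nat \<Rightarrow> real) \<Rightarrow> nat \<Rightarrow> (nat \<Rightarrow> real) set" where
  "W x0 0 = fv.span {x0}"
| "W x0 (Suc k) = (if (\<forall>z\<in>W x0 k. dot n (cc k) z = 0) then Am n al k ` W x0 k
                    else fv.span (Sh n ` W x0 k \<union> {en n}))"

declare W.simps(2)[simp del]

lemma W_forced: "(\<forall>z\<in>W x0 k. dot n (cc k) z = 0) \<Longrightarrow> W x0 (Suc k) = Am n al k ` W x0 k"
  by (simp add: W.simps(2))
lemma W_free: "\<not> (\<forall>z\<in>W x0 k. dot n (cc k) z = 0) \<Longrightarrow> W x0 (Suc k) = fv.span (Sh n ` W x0 k \<union> {en n})"
  by (simp only: W.simps(2) if_False)

lemma W_subspace: "fv.subspace (W x0 k)"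
proof (induction k)
  case 0 then show ?case by (simp add: fv.subspace_span)
next
  case (Suc k) then show ?case
    using subspace_image[of "W x0 k" "Am n al k", OF Suc Am_add Am_sc] fv.subspace_span W_forced W_free by metis
qed

lemma W_supp: assumes "supp n x0" shows "z \<in> W x0 k \<Longrightarrow> supp n z"
proof (induction k arbitrary: z)
  case 0 then show ?case using supp_span[of "{x0}"] assms by simp
next
  case (Suc k)
  show ?case
  proof (cases "\<forall>z\<in>W x0 k. dot n (cc k) z = 0")
    case True then show ?thesis using Suc supp_Am[OF n1] W_forced by auto
  next
    case False
    have "\<forall>s\<in>Sh n ` W x0 k \<union> {en n}. supp n s" using supp_Sh supp_en[OF n1] by auto
    then show ?thesis using False Suc.prems supp_span W_free by metis
  qed
qed

lemma W_fd: "supp n x0 \<Longrightarrow> fd (W x0 k)"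
  using fd_supp W_supp by blast

lemma W_dim_le: "supp n x0 \<Longrightarrow> fv.dim (W x0 k) \<le> n"
  using dim_le_n W_supp by blast

lemma Am_in_W: assumes "z \<in> W x0 k" shows "Am n al k z \<in> W x0 (Suc k)"
proof (cases "\<forall>z\<in>W x0 k. dot n (cc k) z = 0")
  case True then show ?thesis using assms W_forced by simp
next
  case False
  have "Sh n z + sc (dot n (al k) z) (en n) \<in> fv.span (Sh n ` W x0 k \<union> {en n})"
    using assms by (intro fv.span_add fv.span_scale fv.span_base) auto
  then show ?thesis using W_free[OF False] by (simp add: Am_def)
qed

lemma free_in_W:
  assumes "\<not> (\<forall>z\<in>W x0 k. dot n (cc k) z = 0)" "z \<in> W x0 k"
  shows "Sh n z + sc v (en n) \<in> W x0 (Suc k)"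
proof -
  have "Sh n z + sc v (en n) \<in> fv.span (Sh n ` W x0 k \<union> {en n})"
    using assms by (intro fv.span_add fv.span_scale fv.span_base) auto
  then show ?thesis using W_free[OF assms(1)] by simp
qed

lemma ol_in_W: "z \<in> W x0 T \<Longrightarrow> ol n al T z j \<in> W x0 (T + j)"
  by (induction j) (simp_all add: Am_in_W)

lemma traj_in_W:
  assumes "xs 0 = x0" "\<forall>j<k. step n al cc j (xs j) (xs (Suc j))"
  shows "xs k \<in> W x0 k"
  using assms(2)
proof (induction k)
  case 0 then show ?case using assms(1) by (simp add: fv.span_base)
next
  case (Suc k)
  have xk: "xs k \<in> W x0 k" using Suc by simp
  obtain v where v: "xs (Suc k) = Sh n (xs k) + sc v (en n)"
    "dot n (cc k) (xs k) = 0 \<longrightarrow> v = dot n (al k) (xs k)"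
    using Suc.prems unfolding step_def by blast
  show ?case
  proof (cases "\<forall>z\<in>W x0 k. dot n (cc k) z = 0")
    case True
    then have "v = dot n (al k) (xs k)" using v(2) xk by blast
    then have "xs (Suc k) = Am n al k (xs k)" using v(1) by (simp add: Am_def)
    then show ?thesis using Am_in_W[OF xk] by simp
  next
    case False then show ?thesis using free_in_W[OF False xk] v(1) by simp
  qed
qed

lemma step_Am: "step n al cc k x (Am n al k x)"
  unfolding step_def Am_def by blast

lemma generic:
  "finite L \<Longrightarrow> (\<forall>l\<in>L. lfun l \<and> (\<exists>w\<in>W x0 k. l w \<noteq> 0)) \<Longrightarrow>
   \<exists>xs. xs 0 = x0 \<and> (\<forall>j<k. step n al cc j (xs j) (xs (Suc j))) \<and> (\<forall>l\<in>L. l (xs k) \<noteq> 0)"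
proof (induction k arbitrary: L)
  case 0
  have "\<forall>l\<in>L. l x0 \<noteq> 0"
  proof
    fix l assume l: "l \<in> L"
    then obtain w where "w \<in> fv.span {x0}" "l w \<noteq> 0" "lfun l" using 0 by auto
    then show "l x0 \<noteq> 0" using lfun_span_nz by blast
  qed
  then show ?case by (intro exI[of _ "\<lambda>_. x0"]) simp
next
  case (Suc k)
  show ?case
  proof (cases "\<forall>z\<in>W x0 k. dot n (cc k) z = 0")
    case True
    let ?L' = "(\<lambda>l z. l (Am n al k z)) ` L"
    have "\<forall>l'\<in>?L'. lfun l' \<and> (\<exists>w\<in>W x0 k. l' w \<noteq> 0)"
    proof
      fix l' assume "l' \<in> ?L'"
      then obtain l where l: "l \<in> L" "l' = (\<lambda>z. l (Am n al k z))" by blast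
      have lf: "lfun l" using l Suc.prems by blast
      have "lfun l'" using l(2) lfun_comp[of l "Am n al k", OF lf Am_add Am_sc] by simp
      moreover obtain w' where "w' \<in> W x0 (Suc k)" "l w' \<noteq> 0" using Suc.prems l by blast
      then obtain w where "w \<in> W x0 k" "l (Am n al k w) \<noteq> 0" using W_forced[OF True] by auto
      ultimately show "lfun l' \<and> (\<exists>w\<in>W x0 k. l' w \<noteq> 0)" using l by blast
    qed
    then obtain xs where xs: "xs 0 = x0" "\<forall>j<k. step n al cc j (xs j) (xs (Suc j))"
      "\<forall>l\<in>L. l (Am n al k (xs k)) \<noteq> 0"
      using Suc.IH[of ?L'] Suc.prems by auto
    define xs' where "xs' = xs(Suc k := Am n al k (xs k))"
    have "xs' 0 = x0" using xs by (simp add: xs'_def)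
    moreover have "\<forall>j<Suc k. step n al cc j (xs' j) (xs' (Suc j))"
    proof (intro allI impI)
      fix j assume "j < Suc k"
      then show "step n al cc j (xs' j) (xs' (Suc j))"
        using xs(2) step_Am by (cases "j = k") (auto simp: xs'_def)
    qed
    moreover have "\<forall>l\<in>L. l (xs' (Suc k)) \<noteq> 0" using xs(3) by (simp add: xs'_def)
    ultimately show ?thesis by blast
  next
    case False
    then obtain w0 where w0: "w0 \<in> W x0 k" "dot n (cc k) w0 \<noteq> 0" by blast
    define L1 where "L1 = {l\<in>L. l (en n) = 0}"
    define L2 where "L2 = {l\<in>L. l (en n) \<noteq> 0}"
    let ?L' = "insert (dot n (cc k)) ((\<lambda>l z. l (Sh n z)) ` L1)"
    have finL': "finite ?L'" using Suc.prems(1) by (simp add: L1_def)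
    have "\<forall>l'\<in>?L'. lfun l' \<and> (\<exists>w\<in>W x0 k. l' w \<noteq> 0)"
    proof
      fix l' assume "l' \<in> ?L'"
      then consider "l' = dot n (cc k)" | l where "l \<in> L1" "l' = (\<lambda>z. l (Sh n z))" by blast
      then show "lfun l' \<and> (\<exists>w\<in>W x0 k. l' w \<noteq> 0)"
      proof cases
        case 1 then show ?thesis using lfun_dot w0 by blast
      next
        case 2
        then have lL: "l \<in> L" "l (en n) = 0" by (auto simp: L1_def)
        have lf: "lfun l" using Suc.prems lL by blast
        obtain w' where w': "w' \<in> W x0 (Suc k)" "l w' \<noteq> 0" using Suc.prems lL by blast
        then have "w' \<in> fv.span (Sh n ` W x0 k \<union> {en n})" using W_free[OF False] by simp
        then obtain s where s: "s \<in> Sh n ` W x0 k \<union> {en n}" "l s \<noteq> 0"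
          using lfun_span_nz[OF lf] w'(2) by blast
        then obtain w where "w \<in> W x0 k" "l (Sh n w) \<noteq> 0" using lL(2) by auto
        moreover have "lfun l'" using 2 lfun_comp[of l "Sh n", OF lf Sh_add Sh_sc] by simp
        ultimately show ?thesis using 2 by blast
      qed
    qed
    then obtain xs where xs: "xs 0 = x0" "\<forall>j<k. step n al cc j (xs j) (xs (Suc j))"
      "dot n (cc k) (xs k) \<noteq> 0" "\<forall>l\<in>L1. l (Sh n (xs k)) \<noteq> 0"
      using Suc.IH[OF finL'] by auto
    have finB: "finite ((\<lambda>l. - l (Sh n (xs k)) / l (en n)) ` L2)"
      using Suc.prems(1) by (simp add: L2_def)
    obtain v :: real where v: "v \<notin> (\<lambda>l. - l (Sh n (xs k)) / l (en n)) ` L2"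
      using ex_new_if_finite[OF infinite_UNIV_char_0 finB] by blast
    define xs' where "xs' = xs(Suc k := Sh n (xs k) + sc v (en n))"
    have "xs' 0 = x0" using xs by (simp add: xs'_def)
    moreover have "\<forall>j<Suc k. step n al cc j (xs' j) (xs' (Suc j))"
    proof (intro allI impI)
      fix j assume j: "j < Suc k"
      show "step n al cc j (xs' j) (xs' (Suc j))"
      proof (cases "j = k")
        case True
        then show ?thesis using xs(3) unfolding step_def xs'_def by auto
      next
        case False then show ?thesis using xs(2) j by (auto simp: xs'_def)
      qed
    qed
    moreover have "\<forall>l\<in>L. l (xs' (Suc k)) \<noteq> 0"
    proof
      fix l assume lL: "l \<in> L"
      have lf: "lfun l" using Suc.prems lL by blast
      have eq: "l (xs' (Suc k)) = l (Sh n (xs k)) + v * l (en n)"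
        using lf unfolding lfun_def xs'_def by (simp add: fun_upd_def)
      show "l (xs' (Suc k)) \<noteq> 0"
      proof (cases "l (en n) = 0")
        case True then show ?thesis using eq xs(4) lL by (simp add: L1_def)
      next
        case False
        have "l \<in> L2" using False lL by (simp add: L2_def)
        then have "v \<noteq> - l (Sh n (xs k)) / l (en n)" using v by blast
        then show ?thesis using eq False by (auto simp: field_simps)
      qed
    qed
    ultimately show ?thesis by blast
  qed
qed

end


context sysl begin

lemma e0_nz: "e0 \<noteq> 0"
proof
  assume "e0 = 0"
  then have "e0 0 = (0::nat\<Rightarrow>real) 0" by simp
  then show False by (simp add: e0_def zero_fun_apply)
qed

lemma sc_inv_e0: assumes "r \<noteq> 0" shows "sc (1 / r) (sc r e0) = e0"
  using assms by (simp add: sc_sc)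

lemma dim_forced:
  assumes sx: "supp n x0" and fo: "\<forall>z\<in>W x0 k. dot n (cc k) z = 0"
  shows "fv.dim (W x0 k) \<le> fv.dim (W x0 (Suc k))"
proof -
  have inj: "inj_on (Am n al k) (W x0 k)"
  proof (rule inj_on_ker[where f="Am n al k", OF W_subspace Am_add Am_sc])
    fix z assume z: "z \<in> W x0 k" "Am n al k z = 0"
    have sz: "supp n z" using W_supp[OF sx z(1)] .
    have "Sh n z = 0" using Am_zero_Sh[OF n1 z(2)] .
    then obtain r where ze: "z = sc r e0" using kernel_Sh[OF sz] by blast
    have "dot n (cc k) z = 0" using fo z(1) by blast
    then have "r * cc k 0 = 0" using ze dot_sc[of n "cc k" r e0] dot_e0[OF n1] by simp
    then have "r = 0" using c0 by simp
    then show "z = 0" using ze by simp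
  qed
  have sub: "Am n al k ` W x0 k \<subseteq> W x0 (Suc k)" using W_forced[OF fo] by simp
  show ?thesis
    using dim_image_ge[of "W x0 k" "W x0 (Suc k)" "Am n al k", OF W_fd[OF sx] W_fd[OF sx] W_subspace
        Am_add Am_sc inj sub] .
qed

lemma dim_free:
  assumes sx: "supp n x0" and fr: "\<not> (\<forall>z\<in>W x0 k. dot n (cc k) z = 0)"
  shows "fv.dim (W x0 k) + (if e0 \<in> W x0 k then 0 else 1) \<le> fv.dim (W x0 (Suc k))"
proof (cases "e0 \<in> W x0 k")
  case False
  obtain B where B: "B \<subseteq> W x0 k" "fv.independent B" "W x0 k \<subseteq> fv.span B" "card B = fv.dim (W x0 k)" "finite B"
    using basis_fin[OF W_fd[OF sx]] by blast
  have spB: "fv.span B = W x0 k" using fv.span_subspace[OF B(1) B(3) W_subspace] .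
  have inj: "inj_on (Sh n) (W x0 k)"
  proof (rule inj_on_ker[where f="Sh n", OF W_subspace Sh_add Sh_sc])
    fix z assume z: "z \<in> W x0 k" "Sh n z = 0"
    obtain r where ze: "z = sc r e0" using kernel_Sh[OF W_supp[OF sx z(1)] z(2)] by blast
    show "z = 0"
    proof (cases "r = 0")
      case True then show ?thesis using ze by simp
    next
      case nz: False
      have "sc (1 / r) z \<in> W x0 k" using fv.subspace_scale[OF W_subspace z(1)] .
      moreover have "sc (1 / r) z = e0" using sc_inv_e0[OF nz] ze by simp
      ultimately have "e0 \<in> W x0 k" by simp
      then show ?thesis using False by blast
    qed
  qed
  have ind1: "fv.independent (Sh n ` B)" using indep_image[where f="Sh n", OF Sh_add Sh_sc B(2)] inj spB by simp
  have notin: "en n \<notin> fv.span (Sh n ` B)" using en_notin_span_Sh[OF n1] .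
  have ind2: "fv.independent (insert (en n) (Sh n ` B))" using fv.independent_insertI[OF notin ind1] .
  have "en n \<notin> Sh n ` B"
  proof
    assume "en n \<in> Sh n ` B"
    then have "en n \<in> fv.span (Sh n ` B)" by (rule fv.span_base)
    with notin show False by blast
  qed
  then have card: "card (insert (en n) (Sh n ` B)) = card B + 1"
    using B(5) card_image[OF inj_on_subset[OF inj B(1)]] by simp
  have sub: "insert (en n) (Sh n ` B) \<subseteq> W x0 (Suc k)"
  proof -
    have "insert (en n) (Sh n ` B) \<subseteq> Sh n ` W x0 k \<union> {en n}" using B(1) by blast
    then have "insert (en n) (Sh n ` B) \<subseteq> fv.span (Sh n ` W x0 k \<union> {en n})"
      using fv.span_superset by blast
    then show ?thesis using W_free[OF fr] by simp
  qed
  have "card (insert (en n) (Sh n ` B)) \<le> fv.dim (W x0 (Suc k))"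
    using indep_card_le_dim[OF W_fd[OF sx] ind2 sub] by blast
  then show ?thesis using card B(4) False by simp
next
  case True
  have i0: "fv.independent {e0}"
  proof -
    have "e0 \<notin> fv.span {}" using e0_nz by (simp add: fv.span_empty)
    then show ?thesis using fv.independent_insertI[OF _ fv.independent_empty] by blast
  qed
  obtain B where B: "{e0} \<subseteq> B" "B \<subseteq> W x0 k" "fv.independent B" "W x0 k \<subseteq> fv.span B"
    using fv.maximal_independent_subset_extend[of "{e0}" "W x0 k"] True i0 by blast
  have cB: "card B = fv.dim (W x0 k)" using fv.basis_card_eq_dim[OF B(2) B(4) B(3)] .
  have fB: "finite B" using indep_card_le_dim[OF W_fd[OF sx] B(3) B(2)] by blast
  have spB: "fv.span B = W x0 k" using fv.span_subspace[OF B(2) B(4) W_subspace] .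
  define B' where "B' = B - {e0}"
  have indB': "fv.independent B'" using fv.independent_mono[OF B(3)] by (auto simp: B'_def)
  have inj: "inj_on (Sh n) (fv.span B')"
  proof (rule inj_on_ker[where f="Sh n", OF fv.subspace_span Sh_add Sh_sc])
    fix z assume z: "z \<in> fv.span B'" "Sh n z = 0"
    have "z \<in> fv.span B" using fv.span_mono[of B' B] z(1) by (auto simp: B'_def)
    then have "z \<in> W x0 k" using spB by simp
    then obtain r where ze: "z = sc r e0" using kernel_Sh[OF W_supp[OF sx] z(2)] by blast
    show "z = 0"
    proof (cases "r = 0")
      case True then show ?thesis using ze by simp
    next
      case nz: False
      have "sc (1 / r) z \<in> fv.span B'" using fv.span_scale[OF z(1)] .
      moreover have "sc (1 / r) z = e0" using sc_inv_e0[OF nz] ze by simp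
      ultimately have "e0 \<in> fv.span (B - {e0})" by (simp add: B'_def)
      then have "fv.dependent B" using B(1) fv.dependent_def by blast
      then show ?thesis using B(3) by blast
    qed
  qed
  have ind1: "fv.independent (Sh n ` B')" using indep_image[where f="Sh n", OF Sh_add Sh_sc indB' inj] .
  have notin: "en n \<notin> fv.span (Sh n ` B')" using en_notin_span_Sh[OF n1] .
  have ind2: "fv.independent (insert (en n) (Sh n ` B'))" using fv.independent_insertI[OF notin ind1] .
  have "en n \<notin> Sh n ` B'"
  proof
    assume "en n \<in> Sh n ` B'"
    then have "en n \<in> fv.span (Sh n ` B')" by (rule fv.span_base)
    with notin show False by blast
  qed
  moreover have "card (Sh n ` B') = card B'"
    using card_image[OF inj_on_subset[OF inj fv.span_superset]] .
  moreover have "card B' + 1 = card B"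
  proof -
    have "e0 \<in> B" using B(1) by simp
    then have "card B > 0" using fB card_gt_0_iff by blast
    then show ?thesis using fB \<open>e0 \<in> B\<close> by (simp add: B'_def card_Diff_singleton)
  qed
  moreover have "finite B'" using fB by (simp add: B'_def)
  ultimately have card: "card (insert (en n) (Sh n ` B')) = card B" by simp
  have sub: "insert (en n) (Sh n ` B') \<subseteq> W x0 (Suc k)"
  proof -
    have "insert (en n) (Sh n ` B') \<subseteq> Sh n ` W x0 k \<union> {en n}" using B(2) by (auto simp: B'_def)
    then have "insert (en n) (Sh n ` B') \<subseteq> fv.span (Sh n ` W x0 k \<union> {en n})"
      using fv.span_superset by blast
    then show ?thesis using W_free[OF fr] by simp
  qed
  have "card (insert (en n) (Sh n ` B')) \<le> fv.dim (W x0 (Suc k))"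
    using indep_card_le_dim[OF W_fd[OF sx] ind2 sub] by blast
  then show ?thesis using card cB True by simp
qed

lemma dim_mono1: assumes "supp n x0" shows "fv.dim (W x0 k) \<le> fv.dim (W x0 (Suc k))"
proof (cases "\<forall>z\<in>W x0 k. dot n (cc k) z = 0")
  case True show ?thesis using dim_forced[OF assms True] .
next
  case False
  have "fv.dim (W x0 k) + (if e0 \<in> W x0 k then 0 else 1) \<le> fv.dim (W x0 (Suc k))"
    using dim_free[OF assms False] .
  then show ?thesis by (cases "e0 \<in> W x0 k") simp_all
qed

lemma dim_strict:
  assumes "supp n x0" "\<not> (\<forall>z\<in>W x0 k. dot n (cc k) z = 0)" "e0 \<notin> W x0 k"
  shows "fv.dim (W x0 k) < fv.dim (W x0 (Suc k))"
proof -
  have "fv.dim (W x0 k) + (if e0 \<in> W x0 k then 0 else 1) \<le> fv.dim (W x0 (Suc k))"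
    using dim_free[OF assms(1,2)] .
  then show ?thesis using assms(3) by simp
qed

lemma dim_mono: assumes "supp n x0" "k \<le> k'" shows "fv.dim (W x0 k) \<le> fv.dim (W x0 k')"
  using assms(2)
proof (induction k' rule: dec_induct)
  case base then show ?case by simp
next
  case (step m) then show ?case using dim_mono1[OF assms(1), of m] by simp
qed

end


lemma fin_sum_uv:
  assumes "finite F" "\<forall>i. i \<notin> F \<longrightarrow> y i = 0"
  shows "y = (\<Sum>i\<in>F. sc (y i) (uv i))"
proof (rule ext)
  fix j
  have "(\<Sum>i\<in>F. sc (y i) (uv i)) j = (\<Sum>i\<in>F. y i * uv i j)"
    using assms(1)
  proof (induction F rule: finite_induct)
    case empty then show ?case by (simp only: sum.empty zero_fun_apply)
  next
    case (insert x F)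
    have "(\<Sum>i\<in>insert x F. sc (y i) (uv i)) j = (sc (y x) (uv x) + (\<Sum>i\<in>F. sc (y i) (uv i))) j"
      by (simp only: sum.insert[OF insert.hyps])
    also have "\<dots> = y x * uv x j + (\<Sum>i\<in>F. sc (y i) (uv i)) j"
      by (simp only: plus_fun_apply sc_apply)
    finally show ?case using insert by simp
  qed
  also have "\<dots> = (\<Sum>i\<in>F. if i = j then y j else 0)"
    by (rule sum.cong) (auto simp: uv_def)
  also have "\<dots> = (if j \<in> F then y j else 0)"
    using assms(1) by (simp add: sum.delta)
  also have "\<dots> = y j" using assms(2) by auto
  finally show "y j = (\<Sum>i\<in>F. sc (y i) (uv i)) j" by (rule sym)
qed

lemma fin_in_span:
  assumes "finite F" "\<forall>i. i \<notin> F \<longrightarrow> y i = 0"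
  shows "y \<in> fv.span (uv ` F)"
proof -
  have "(\<Sum>i\<in>F. sc (y i) (uv i)) \<in> fv.span (uv ` F)"
    by (intro fv.span_sum fv.span_scale fv.span_base) auto
  then show ?thesis by (subst fin_sum_uv[OF assms])
qed

context sysl begin

definition Fr :: "(nat \<Rightarrow> real) \<Rightarrow> nat \<Rightarrow> nat \<Rightarrow> bool" where
  "Fr x0 T i \<longleftrightarrow> \<not> (\<forall>z\<in>W x0 (T + i). dot n (cc (T + i)) z = 0)"

fun pr :: "(nat \<Rightarrow> real) \<Rightarrow> nat \<Rightarrow> (nat \<Rightarrow> real) \<Rightarrow> (nat \<Rightarrow> real) \<Rightarrow> nat \<Rightarrow> (nat \<Rightarrow> real)" where
  "pr x0 T z lam 0 = z"
| "pr x0 T z lam (Suc i) = (if Fr x0 T i then Sh n (pr x0 T z lam i) + sc (lam i) (en n)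
                             else Am n al (T + i) (pr x0 T z lam i))"

lemma pr_add: "pr x0 T (z1 + z2) (l1 + l2) i = pr x0 T z1 l1 i + pr x0 T z2 l2 i"
proof (induction i)
  case 0 then show ?case by simp
next
  case (Suc i)
  show ?case
  proof (cases "Fr x0 T i")
    case True
    have "pr x0 T (z1 + z2) (l1 + l2) (Suc i) =
          Sh n (pr x0 T (z1 + z2) (l1 + l2) i) + sc ((l1 + l2) i) (en n)"
      using True by simp
    also have "\<dots> = Sh n (pr x0 T z1 l1 i + pr x0 T z2 l2 i) + sc (l1 i + l2 i) (en n)"
      by (subst Suc.IH, subst plus_fun_apply, rule refl)
    also have "\<dots> = (Sh n (pr x0 T z1 l1 i) + sc (l1 i) (en n)) + (Sh n (pr x0 T z2 l2 i) + sc (l2 i) (en n))"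
      by (simp only: Sh_add sc_add2 add_ac)
    finally show ?thesis using True by simp
  next
    case False
    have "pr x0 T (z1 + z2) (l1 + l2) (Suc i) = Am n al (T + i) (pr x0 T (z1 + z2) (l1 + l2) i)"
      using False by simp
    also have "\<dots> = Am n al (T + i) (pr x0 T z1 l1 i + pr x0 T z2 l2 i)"
      by (subst Suc.IH, rule refl)
    also have "\<dots> = Am n al (T + i) (pr x0 T z1 l1 i) + Am n al (T + i) (pr x0 T z2 l2 i)"
      by (rule Am_add)
    finally show ?thesis using False by simp
  qed
qed

lemma pr_sc: "pr x0 T (sc r z) (\<lambda>j. r * lam j) i = sc r (pr x0 T z lam i)"
proof (induction i)
  case 0 then show ?case by simp
next
  case (Suc i)
  show ?case
  proof (cases "Fr x0 T i")
    case True
    have "pr x0 T (sc r z) (\<lambda>j. r * lam j) (Suc i) = Sh n (pr x0 T (sc r z) (\<lambda>j. r * lam j) i) + sc (r * lam i) (en n)"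
      using True by simp
    also have "\<dots> = Sh n (sc r (pr x0 T z lam i)) + sc (r * lam i) (en n)"
      by (subst Suc.IH, rule refl)
    also have "\<dots> = sc r (Sh n (pr x0 T z lam i) + sc (lam i) (en n))"
      by (simp only: Sh_sc sc_add sc_sc)
    finally show ?thesis using True by simp
  next
    case False
    have "pr x0 T (sc r z) (\<lambda>j. r * lam j) (Suc i) = Am n al (T + i) (pr x0 T (sc r z) (\<lambda>j. r * lam j) i)"
      using False by simp
    also have "\<dots> = Am n al (T + i) (sc r (pr x0 T z lam i))"
      by (subst Suc.IH, rule refl)
    also have "\<dots> = sc r (Am n al (T + i) (pr x0 T z lam i))"
      by (rule Am_sc)
    finally show ?thesis using False by simp
  qed
qed

lemma pr_zero: "pr x0 T 0 0 i = 0"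
proof (induction i)
  case 0 then show ?case by simp
next
  case (Suc i)
  have "(0::nat\<Rightarrow>real) i = 0" by (rule zero_fun_apply)
  then show ?case using Suc by simp
qed

lemma pr_split: "pr x0 T z lam i = pr x0 T z 0 i + pr x0 T 0 lam i"
  using pr_add[of x0 T z 0 0 lam i] by simp

lemma pr_lin0_add: "pr x0 T (z1 + z2) 0 i = pr x0 T z1 0 i + pr x0 T z2 0 i"
  using pr_add[of x0 T z1 z2 0 0 i] by simp

lemma pr_lin0_sc: "pr x0 T (sc r z) 0 i = sc r (pr x0 T z 0 i)"
proof -
  have "(\<lambda>j. r * (0::nat\<Rightarrow>real) j) = 0" by (simp add: fun_eq_iff zero_fun_apply)
  then show ?thesis using pr_sc[of x0 T r z 0 i] by simp
qed

lemma pr_cong: "(\<And>j. j < i \<Longrightarrow> Fr x0 T j \<Longrightarrow> lam j = lam' j) \<Longrightarrow> pr x0 T z lam i = pr x0 T z lam' i"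
  by (induction i) auto

lemma pr_in_W: "z \<in> W x0 T \<Longrightarrow> pr x0 T z lam i \<in> W x0 (T + i)"
proof (induction i)
  case 0 then show ?case by simp
next
  case (Suc i)
  show ?case
  proof (cases "Fr x0 T i")
    case True
    then show ?thesis using free_in_W[of x0 "T + i"] Suc by (simp add: Fr_def)
  next
    case False then show ?thesis using Am_in_W Suc by simp
  qed
qed

lemma pr_supp: "supp n z \<Longrightarrow> supp n (pr x0 T z lam i)"
proof (induction i)
  case 0 then show ?case by simp
next
  case (Suc i)
  show ?case
  proof (cases "Fr x0 T i")
    case True
    then show ?thesis using supp_add[OF supp_Sh supp_sc[OF supp_en[OF n1]]] by simp
  next
    case False
    then show ?thesis using supp_Am[OF n1] by simp
  qed
qed

definition app :: "(nat \<Rightarrow> real) \<Rightarrow> nat \<Rightarrow> (nat \<Rightarrow> real) \<Rightarrow> (nat \<Rightarrow> real) \<Rightarrow> nat \<Rightarrow> real" where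
  "app x0 T z lam j = (if Fr x0 T j then lam j else dot n (al (T + j)) (pr x0 T z lam j))"

lemma pr_pos:
  "i \<le> n \<Longrightarrow> p < n \<Longrightarrow>
   pr x0 T z lam i p = (if p + i < n then z (p + i) else app x0 T z lam (p + i - n))"
proof (induction i arbitrary: p)
  case 0 then show ?case by simp
next
  case (Suc i)
  have common: "pr x0 T z lam (Suc i) p = Sh n (pr x0 T z lam i) p + app x0 T z lam i * en n p"
    by (cases "Fr x0 T i") (simp_all add: app_def Am_def plus_fun_apply sc_apply)
  show ?case
  proof (cases "p + 1 < n")
    case True
    have "Sh n (pr x0 T z lam i) p = pr x0 T z lam i (p + 1)" using True by (simp add: Sh_def)
    also have "\<dots> = (if p + 1 + i < n then z (p + 1 + i) else app x0 T z lam (p + 1 + i - n))"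
      using Suc.IH[of "p + 1"] Suc.prems True by simp
    finally show ?thesis using common True by (simp add: en_def)
  next
    case False
    then have p: "p = n - 1" using Suc.prems by simp
    have "Sh n (pr x0 T z lam i) p = 0" using False by (simp add: Sh_def)
    moreover have "en n p = 1" using p by (simp add: en_def)
    moreover have "\<not> (p + Suc i < n)" using p n1 by simp
    moreover have "p + Suc i - n = i" using p n1 by simp
    ultimately show ?thesis using common by simp
  qed
qed

definition Ob :: "(nat \<Rightarrow> real) \<Rightarrow> nat \<Rightarrow> (nat \<Rightarrow> real) \<Rightarrow> (nat \<Rightarrow> real)" where
  "Ob x0 T z = (\<lambda>i. if i < n \<and> Fr x0 T i then dot n (cc (T + i)) (ol n al T z i) else 0)"

lemma Ob_add: "Ob x0 T (x + y) = Ob x0 T x + Ob x0 T y"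
proof (rule ext)
  fix i
  have e1: "(Ob x0 T x + Ob x0 T y) i = Ob x0 T x i + Ob x0 T y i" by (rule plus_fun_apply)
  have e2: "dot n (cc (T + i)) (ol n al T (x + y) i) =
            dot n (cc (T + i)) (ol n al T x i) + dot n (cc (T + i)) (ol n al T y i)"
    by (simp only: ol_add dot_add)
  show "Ob x0 T (x + y) i = (Ob x0 T x + Ob x0 T y) i"
    unfolding e1 by (simp only: Ob_def e2 if_distrib) simp
qed
lemma Ob_sc: "Ob x0 T (sc r x) = sc r (Ob x0 T x)"
proof (rule ext)
  fix i
  have e1: "sc r (Ob x0 T x) i = r * Ob x0 T x i" by (rule sc_apply)
  have e2: "dot n (cc (T + i)) (ol n al T (sc r x) i) = r * dot n (cc (T + i)) (ol n al T x i)"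
    by (simp only: ol_sc dot_sc)
  show "Ob x0 T (sc r x) i = sc r (Ob x0 T x) i"
    unfolding e1 by (simp only: Ob_def e2) simp
qed

lemma obs_bound:
  assumes sx: "supp n x0"
  shows "fv.dim (W x0 T) \<le> card {i. i < n \<and> Fr x0 T i}"
proof -
  define F where "F = {i. i < n \<and> Fr x0 T i}"
  have finF: "finite F" by (simp add: F_def)
  have inj: "inj_on (Ob x0 T) (W x0 T)"
  proof (rule inj_on_ker[where f="Ob x0 T", OF W_subspace Ob_add Ob_sc])
    fix z assume z: "z \<in> W x0 T" "Ob x0 T z = 0"
    show "z = 0"
    proof (rule obs[OF W_supp[OF sx z(1)]])
      fix j assume j: "j < n"
      show "dot n (cc (T + j)) (ol n al T z j) = 0"
      proof (cases "Fr x0 T j")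
        case True
        have "Ob x0 T z j = 0" using z(2) by (simp add: zero_fun_apply)
        then show ?thesis using True j by (simp add: Ob_def)
      next
        case False
        then show ?thesis using ol_in_W[OF z(1), of j] by (simp add: Fr_def)
      qed
    qed
  qed
  obtain B where B: "B \<subseteq> W x0 T" "fv.independent B" "W x0 T \<subseteq> fv.span B" "card B = fv.dim (W x0 T)" "finite B"
    using basis_fin[OF W_fd[OF sx]] by blast
  have spB: "fv.span B = W x0 T" using fv.span_subspace[OF B(1) B(3) W_subspace] .
  have ind: "fv.independent (Ob x0 T ` B)"
    using indep_image[where f="Ob x0 T", OF Ob_add Ob_sc B(2)] inj spB by simp
  have sub: "Ob x0 T ` B \<subseteq> fv.span (uv ` F)"
  proof
    fix y assume "y \<in> Ob x0 T ` B"
    then obtain z where "y = Ob x0 T z" by blast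
    then have "\<forall>i. i \<notin> F \<longrightarrow> y i = 0" by (simp add: Ob_def F_def)
    then show "y \<in> fv.span (uv ` F)" using fin_in_span[OF finF] by blast
  qed
  have "card (Ob x0 T ` B) \<le> card (uv ` F)"
    using fv.independent_span_bound[OF _ ind sub] finF by blast
  also have "\<dots> \<le> card F" using card_image_le[OF finF] .
  finally have "card (Ob x0 T ` B) \<le> card F" .
  moreover have "card (Ob x0 T ` B) = card B" using card_image[OF inj_on_subset[OF inj B(1)]] .
  ultimately show ?thesis using B(4) by (simp add: F_def)
qed

end


lemma lfun_coord: "lfun (\<lambda>x. x p)"
  unfolding lfun_def by (simp add: plus_fun_apply sc_apply)

lemma lfun_coord_minus:
  assumes qa: "\<And>x y. Q (x + y) = Q x + Q y" and qs: "\<And>r x. Q (sc r x) = sc r (Q x)"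
  shows "lfun (\<lambda>x. x p - Q x p)"
  unfolding lfun_def
proof (intro conjI allI)
  fix x y :: "nat \<Rightarrow> real"
  have a: "(x + y) p = x p + y p" by (rule plus_fun_apply)
  have "Q (x + y) p = (Q x + Q y) p" by (rule fun_cong[OF qa])
  also have "\<dots> = Q x p + Q y p" by (rule plus_fun_apply)
  finally have b: "Q (x + y) p = Q x p + Q y p" .
  show "(x + y) p - Q (x + y) p = (x p - Q x p) + (y p - Q y p)" unfolding a b by simp
next
  fix r :: real and x :: "nat \<Rightarrow> real"
  have a: "sc r x p = r * x p" by (rule sc_apply)
  have "Q (sc r x) p = sc r (Q x) p" by (rule fun_cong[OF qs])
  also have "\<dots> = r * Q x p" by (rule sc_apply)
  finally have b: "Q (sc r x) p = r * Q x p" .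
  show "sc r x p - Q (sc r x) p = r * (x p - Q x p)" unfolding a b by (simp add: algebra_simps)
qed

context sysl begin

lemma pr_n_pos: "p < n \<Longrightarrow> pr x0 T z lam n p = app x0 T z lam p"
  using pr_pos[of n p x0 T z lam] by simp

lemma Zrun_zero:
  assumes sx: "supp n x0" and eqd: "fv.dim (W x0 (T + n)) = fv.dim (W x0 T)" and z: "z \<in> W x0 T"
  shows "pr x0 T z 0 n = 0"
proof (rule ccontr)
  define v where "v = pr x0 T z 0 n"
  assume "pr x0 T z 0 n \<noteq> 0"
  then have vnz: "v \<noteq> 0" by (simp add: v_def)
  define F where "F = {i. i < n \<and> Fr x0 T i}"
  define u where "u i = pr x0 T 0 (uv i) n" for i
  define Q where "Q x = pr x0 T 0 (\<lambda>j. if j < n \<and> Fr x0 T j then x j else 0) n" for x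
  have finF: "finite F" by (simp add: F_def)
  have vF: "v i = 0" if "i \<in> F" for i
  proof -
    have "v i = app x0 T z 0 i" using that pr_n_pos by (simp add: v_def F_def)
    also have "\<dots> = 0" using that by (simp add: app_def F_def zero_fun_apply)
    finally show ?thesis .
  qed
  have uF: "u i p = uv i p" if "p \<in> F" for i p
  proof -
    have "u i p = app x0 T 0 (uv i) p" using that pr_n_pos by (simp add: u_def F_def)
    also have "\<dots> = uv i p" using that by (simp add: app_def F_def)
    finally show ?thesis .
  qed
  have Qu: "Q (u i) = u i" if "i \<in> F" for i
  proof -
    have "Q (u i) = pr x0 T 0 (uv i) n"
      unfolding Q_def by (rule pr_cong) (use uF in \<open>auto simp: F_def\<close>)
    then show ?thesis by (simp add: u_def)
  qed
  have Qv: "Q v = 0"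
  proof -
    have "Q v = pr x0 T 0 0 n"
      unfolding Q_def by (rule pr_cong) (use vF in \<open>auto simp: F_def zero_fun_apply\<close>)
    then show ?thesis using pr_zero by simp
  qed
  have Q_add: "Q (x + y) = Q x + Q y" for x y
  proof -
    have e: "(\<lambda>j. if j < n \<and> Fr x0 T j then (x + y) j else 0) =
          (\<lambda>j. if j < n \<and> Fr x0 T j then x j else 0) + (\<lambda>j. if j < n \<and> Fr x0 T j then y j else 0)"
      by (rule ext) (simp add: plus_fun_apply)
    have "Q (x + y) = pr x0 T (0 + 0) ((\<lambda>j. if j < n \<and> Fr x0 T j then x j else 0) + (\<lambda>j. if j < n \<and> Fr x0 T j then y j else 0)) n"
      unfolding Q_def e by simp
    also have "\<dots> = Q x + Q y" unfolding Q_def by (rule pr_add)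
    finally show ?thesis .
  qed
  have Q_sc: "Q (sc r x) = sc r (Q x)" for r x
  proof -
    have e: "(\<lambda>j. if j < n \<and> Fr x0 T j then sc r x j else 0) =
          (\<lambda>j. r * (if j < n \<and> Fr x0 T j then x j else 0))"
      by (rule ext) (simp add: sc_apply)
    have "Q (sc r x) = pr x0 T (sc r 0) (\<lambda>j. r * (if j < n \<and> Fr x0 T j then x j else 0)) n"
      unfolding Q_def e by simp
    also have "\<dots> = sc r (Q x)" unfolding Q_def by (rule pr_sc)
    finally show ?thesis .
  qed
  obtain p0 where p0: "v p0 \<noteq> 0"
  proof -
    have "\<exists>p. v p \<noteq> 0"
    proof (rule ccontr)
      assume "\<not> (\<exists>p. v p \<noteq> 0)"
      then have "v = 0" by (simp add: fun_eq_iff zero_fun_apply)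
      then show False using vnz by simp
    qed
    then show ?thesis using that by blast
  qed
  have uii: "u i i = 1" if "i \<in> F" for i using uF[OF that, of i] by (simp add: uv_def)
  have uji: "u j i = 0" if "i \<in> F" "j \<noteq> i" for i j using uF[OF that(1), of j] that(2) by (simp add: uv_def)
  have uinj: "inj_on u F"
  proof (rule inj_onI)
    fix i j assume ij: "i \<in> F" "j \<in> F" "u i = u j"
    show "i = j"
    proof (rule ccontr)
      assume "i \<noteq> j"
      then have "u j i = 0" using uji[OF ij(1), of j] by auto
      then show False using uii[OF ij(1)] ij(3) by simp
    qed
  qed
  have vnotin: "v \<notin> u ` F"
  proof
    assume "v \<in> u ` F"
    then obtain i where "i \<in> F" "v = u i" by blast
    then show False using vF uii by fastforce
  qed
  define S where "S = insert v (u ` F)"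
  have finS: "finite S" using finF by (simp add: S_def)
  have cardS: "card S = card F + 1"
    using vnotin card_image[OF uinj] finF by (simp add: S_def)
  have indS: "fv.independent S"
  proof (rule biorth_indep[OF finS])
    fix t assume "t \<in> S"
    then consider "t = v" | i where "i \<in> F" "t = u i" by (auto simp: S_def)
    then show "\<exists>l. lfun l \<and> l t \<noteq> 0 \<and> (\<forall>s\<in>S. s \<noteq> t \<longrightarrow> l s = 0)"
    proof cases
      case 1
      let ?l = "\<lambda>x. x p0 - Q x p0"
      have "lfun ?l" by (rule lfun_coord_minus[OF Q_add Q_sc])
      moreover have "?l t \<noteq> 0" using 1 Qv p0 by (simp add: zero_fun_apply)
      moreover have "\<forall>s\<in>S. s \<noteq> t \<longrightarrow> ?l s = 0"
        using 1 Qu by (auto simp: S_def)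
      ultimately show ?thesis by blast
    next
      case 2
      let ?l = "\<lambda>x. x i"
      have "lfun ?l" by (rule lfun_coord)
      moreover have "?l t \<noteq> 0" using 2 uii by simp
      moreover have "\<forall>s\<in>S. s \<noteq> t \<longrightarrow> ?l s = 0"
      proof (intro ballI impI)
        fix s assume s: "s \<in> S" "s \<noteq> t"
        then consider "s = v" | j where "j \<in> F" "s = u j" by (auto simp: S_def)
        then show "?l s = 0"
        proof cases
          case 1 then show ?thesis using vF 2 by simp
        next
          case 3: 2
          then have "j \<noteq> i" using s(2) \<open>t = u i\<close> by blast
          then show ?thesis using uji[OF \<open>i \<in> F\<close>] 3 by simp
        qed
      qed
      ultimately show ?thesis by blast
    qed
  qed
  have z0: "0 \<in> W x0 T" using fv.subspace_0[OF W_subspace] .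
  have subS: "S \<subseteq> W x0 (T + n)"
    using pr_in_W[OF z] pr_in_W[OF z0] by (auto simp: S_def v_def u_def)
  have "card S \<le> fv.dim (W x0 (T + n))" using indep_card_le_dim[OF W_fd[OF sx] indS subS] by blast
  also have "\<dots> = fv.dim (W x0 T)" by (rule eqd)
  also have "\<dots> \<le> card F" using obs_bound[OF sx] by (simp add: F_def)
  finally show False using cardS by simp
qed

end


lemma sc_one: "sc 1 x = x" by (simp add: fun_eq_iff sc_apply)

context sysl begin

lemma app_zero:
  assumes sx: "supp n x0" and eqd: "fv.dim (W x0 (T + n)) = fv.dim (W x0 T)"
    and z: "z \<in> W x0 T" and p: "p < n"
  shows "app x0 T z 0 p = 0"
proof -
  have "app x0 T z 0 p = pr x0 T z 0 n p" using pr_n_pos[OF p] by simp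
  also have "\<dots> = (0::nat\<Rightarrow>real) p" using Zrun_zero[OF sx eqd z] by simp
  finally show ?thesis by (simp add: zero_fun_apply)
qed

lemma pr_z0_pos:
  assumes sx: "supp n x0" and eqd: "fv.dim (W x0 (T + n)) = fv.dim (W x0 T)"
    and z: "z \<in> W x0 T" and i: "i \<le> n" and p: "p < n"
  shows "pr x0 T z 0 i p = (if p + i < n then z (p + i) else 0)"
proof -
  have "p + i - n < n" using i p by simp
  then show ?thesis using pr_pos[OF i p, of x0 T z 0] app_zero[OF sx eqd z] by simp
qed

lemma W_sub_pr: "w \<in> W x0 (T + i) \<Longrightarrow> \<exists>z\<in>W x0 T. \<exists>lam. w = pr x0 T z lam i"
proof (induction i arbitrary: w)
  case 0 then show ?case by (intro bexI[of _ w] exI[of _ 0]) simp_all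
next
  case (Suc i)
  show ?case
  proof (cases "Fr x0 T i")
    case False
    then have fo: "\<forall>z\<in>W x0 (T + i). dot n (cc (T + i)) z = 0" by (simp add: Fr_def)
    have "w \<in> Am n al (T + i) ` W x0 (T + i)" using Suc.prems W_forced[OF fo] by simp
    then obtain w' where w': "w' \<in> W x0 (T + i)" "w = Am n al (T + i) w'" by blast
    obtain z lam where zl: "z \<in> W x0 T" "w' = pr x0 T z lam i" using Suc.IH[OF w'(1)] by blast
    have "w = pr x0 T z lam (Suc i)" using w'(2) zl(2) False by simp
    then show ?thesis using zl(1) by blast
  next
    case True
    then have fr: "\<not> (\<forall>z\<in>W x0 (T + i). dot n (cc (T + i)) z = 0)" by (simp add: Fr_def)
    define P where "P = {y. \<exists>z\<in>W x0 T. \<exists>lam. y = pr x0 T z lam (Suc i)}"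
    have subP: "fv.subspace P"
      unfolding fv.subspace_def
    proof (intro conjI ballI allI)
      have "(0::nat\<Rightarrow>real) = pr x0 T 0 0 (Suc i)" by (rule sym, rule pr_zero)
      then show "0 \<in> P" using fv.subspace_0[OF W_subspace] unfolding P_def by blast
    next
      fix x y assume "x \<in> P" "y \<in> P"
      then obtain z1 l1 z2 l2 where h: "z1 \<in> W x0 T" "x = pr x0 T z1 l1 (Suc i)" "z2 \<in> W x0 T" "y = pr x0 T z2 l2 (Suc i)"
        unfolding P_def by blast
      have zz: "z1 + z2 \<in> W x0 T" using h(1,3) fv.subspace_add[OF W_subspace] by blast
      have "x + y = pr x0 T (z1 + z2) (l1 + l2) (Suc i)"
        unfolding h(2,4) by (rule pr_add[symmetric])
      then show "x + y \<in> P" using zz unfolding P_def by blast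
    next
      fix c x assume "x \<in> P"
      then obtain z l where h: "z \<in> W x0 T" "x = pr x0 T z l (Suc i)" unfolding P_def by blast
      have zz: "sc c z \<in> W x0 T" using h(1) fv.subspace_scale[OF W_subspace] by blast
      have "sc c x = pr x0 T (sc c z) (\<lambda>j. c * l j) (Suc i)"
        unfolding h(2) by (rule pr_sc[symmetric])
      then show "sc c x \<in> P" using zz unfolding P_def by blast
    qed
    have gen: "Sh n ` W x0 (T + i) \<union> {en n} \<subseteq> P"
    proof
      fix y assume "y \<in> Sh n ` W x0 (T + i) \<union> {en n}"
      then consider w' where "w' \<in> W x0 (T + i)" "y = Sh n w'" | "y = en n" by blast
      then show "y \<in> P"
      proof cases
        case 1
        obtain z lam where zl: "z \<in> W x0 T" "w' = pr x0 T z lam i" using Suc.IH[OF 1(1)] by blast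
        have c: "pr x0 T z (lam(i := 0)) i = pr x0 T z lam i" by (rule pr_cong) simp
        have "pr x0 T z (lam(i := 0)) (Suc i) = Sh n (pr x0 T z (lam(i := 0)) i) + sc 0 (en n)"
          using True by simp
        also have "\<dots> = y" using c zl(2) 1(2) by simp
        finally show ?thesis using zl(1) unfolding P_def by blast
      next
        case 2
        have c: "pr x0 T 0 (uv i) i = pr x0 T 0 0 i" by (rule pr_cong) (simp add: uv_def zero_fun_apply)
        have "pr x0 T 0 (uv i) (Suc i) = Sh n (pr x0 T 0 (uv i) i) + sc (uv i i) (en n)"
          using True by simp
        also have "\<dots> = en n" using c pr_zero by (simp add: uv_def sc_one)
        finally have "pr x0 T 0 (uv i) (Suc i) = en n" .
        then have "y = pr x0 T 0 (uv i) (Suc i)" using 2 by simp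
        then show ?thesis using fv.subspace_0[OF W_subspace] unfolding P_def by blast
      qed
    qed
    have "w \<in> fv.span (Sh n ` W x0 (T + i) \<union> {en n})" using Suc.prems W_free[OF fr] by simp
    then have "w \<in> P" using fv.span_minimal[OF gen subP] by blast
    then show ?thesis unfolding P_def by blast
  qed
qed

lemma stuck:
  assumes sx: "supp n x0" and eqd: "fv.dim (W x0 (T + n)) = fv.dim (W x0 T)"
    and i: "i < n" and fr: "Fr x0 T i"
  shows "e0 \<in> W x0 (T + i)"
proof (rule ccontr)
  assume ne: "e0 \<notin> W x0 (T + i)"
  have frr: "\<not> (\<forall>z\<in>W x0 (T + i). dot n (cc (T + i)) z = 0)" using fr by (simp add: Fr_def)
  have a: "fv.dim (W x0 (T + i)) < fv.dim (W x0 (Suc (T + i)))" using dim_strict[OF sx frr ne] .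
  have b: "fv.dim (W x0 T) \<le> fv.dim (W x0 (T + i))" using dim_mono[OF sx] by simp
  have c: "fv.dim (W x0 (Suc (T + i))) \<le> fv.dim (W x0 (T + n))" using dim_mono[OF sx] i by simp
  show False using a b c eqd by simp
qed

lemma G2:
  assumes sx: "supp n x0" and eqd: "fv.dim (W x0 (T + n)) = fv.dim (W x0 T)"
    and i: "i < n" and fr: "Fr x0 T i"
  shows "\<exists>z\<in>W x0 T. dot n (cc (T + i)) (pr x0 T z 0 i) \<noteq> 0"
proof -
  obtain z lam where zl: "z \<in> W x0 T" "e0 = pr x0 T z lam i"
    using W_sub_pr[OF stuck[OF sx eqd i fr]] by blast
  have "pr x0 T z 0 i = e0"
  proof (rule ext)
    fix p
    show "pr x0 T z 0 i p = e0 p"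
    proof (cases "p < n")
      case True
      have "e0 = pr x0 T z 0 i + pr x0 T 0 lam i"
        using zl(2) pr_split[of x0 T z lam i] by simp
      then have "e0 p = (pr x0 T z 0 i + pr x0 T 0 lam i) p" by (rule fun_cong)
      also have "\<dots> = pr x0 T z 0 i p + pr x0 T 0 lam i p" by (rule plus_fun_apply)
      finally have sp: "e0 p = pr x0 T z 0 i p + pr x0 T 0 lam i p" .
      have a: "pr x0 T 0 lam i p = (if p + i < n then 0 else app x0 T 0 lam (p + i - n))"
        using pr_pos[of i p x0 T 0 lam] i True by (simp add: zero_fun_apply)
      have b: "pr x0 T z 0 i p = (if p + i < n then z (p + i) else 0)"
        using pr_z0_pos[OF sx eqd zl(1), of i p] i True by simp
      show ?thesis
      proof (cases "p + i < n")
        case True then show ?thesis using sp a by simp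
      next
        case False
        then have "p \<noteq> 0" using i by simp
        then show ?thesis using b False by (simp add: e0_def)
      qed
    next
      case False
      have "supp n (pr x0 T z 0 i)" using pr_supp W_supp[OF sx zl(1)] by blast
      then have "pr x0 T z 0 i p = 0" using False by (simp add: supp_def)
      moreover have "e0 p = 0" using False n1 by (simp add: e0_def)
      ultimately show ?thesis by simp
    qed
  qed
  then have "dot n (cc (T + i)) (pr x0 T z 0 i) = cc (T + i) 0" using dot_e0[OF n1] by simp
  then have "dot n (cc (T + i)) (pr x0 T z 0 i) \<noteq> 0" using c0[of "T + i"] by simp
  then show ?thesis using zl(1) by blast
qed

end


context sysl begin

lemma key:
  assumes sx: "supp n x0" and eqd: "fv.dim (W x0 (T + n)) = fv.dim (W x0 T)"
  shows "\<exists>xs. xs 0 = x0 \<and> (\<forall>j<T + n. step n al cc j (xs j) (xs (Suc j))) \<and> xs (T + n) = 0"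
proof -
  define F where "F = {i. i < n \<and> Fr x0 T i}"
  define L where "L = (\<lambda>i z. dot n (cc (T + i)) (pr x0 T z 0 i)) ` F"
  have finL: "finite L" by (simp add: L_def F_def)
  have Lok: "\<forall>l\<in>L. lfun l \<and> (\<exists>w\<in>W x0 T. l w \<noteq> 0)"
  proof
    fix l assume "l \<in> L"
    then obtain i where i: "i \<in> F" "l = (\<lambda>z. dot n (cc (T + i)) (pr x0 T z 0 i))" by (auto simp: L_def)
    have "lfun l"
      unfolding i(2) by (rule lfun_comp[of "dot n (cc (T + i))" "\<lambda>z. pr x0 T z 0 i", OF lfun_dot pr_lin0_add pr_lin0_sc])
    moreover have "\<exists>w\<in>W x0 T. l w \<noteq> 0" using G2[OF sx eqd] i by (simp add: F_def)
    ultimately show "lfun l \<and> (\<exists>w\<in>W x0 T. l w \<noteq> 0)" by blast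
  qed
  obtain xs where xs: "xs 0 = x0" "\<forall>j<T. step n al cc j (xs j) (xs (Suc j))" "\<forall>l\<in>L. l (xs T) \<noteq> 0"
    using generic[OF finL Lok] by blast
  have zT: "xs T \<in> W x0 T" using traj_in_W[OF xs(1) xs(2)] .
  define ys where "ys k = (if k \<le> T then xs k else pr x0 T (xs T) 0 (k - T))" for k
  have ysT: "ys (T + i) = pr x0 T (xs T) 0 i" for i
    by (cases "i = 0") (simp_all add: ys_def)
  have "ys 0 = x0" using xs(1) by (simp add: ys_def)
  moreover have "\<forall>j<T + n. step n al cc j (ys j) (ys (Suc j))"
  proof (intro allI impI)
    fix j assume j: "j < T + n"
    show "step n al cc j (ys j) (ys (Suc j))"
    proof (cases "j < T")
      case True then show ?thesis using xs(2) by (simp add: ys_def)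
    next
      case False
      define i where "i = j - T"
      have ji: "j = T + i" "i < n" using False j by (simp_all add: i_def)
      have yj: "ys j = pr x0 T (xs T) 0 i" using ysT ji(1) by simp
      have yj1: "ys (Suc j) = pr x0 T (xs T) 0 (Suc i)" using ysT[of "Suc i"] ji(1) by simp
      show ?thesis
      proof (cases "Fr x0 T i")
        case True
        have "i \<in> F" using True ji(2) by (simp add: F_def)
        then have "dot n (cc j) (pr x0 T (xs T) 0 i) \<noteq> 0" using xs(3) ji(1) by (auto simp: L_def)
        moreover have "pr x0 T (xs T) 0 (Suc i) = Sh n (pr x0 T (xs T) 0 i) + sc 0 (en n)"
          using True by (simp add: zero_fun_apply)
        ultimately show ?thesis unfolding step_def yj yj1 by blast
      next
        case False
        have "pr x0 T (xs T) 0 (Suc i) = Am n al j (pr x0 T (xs T) 0 i)" using False ji(1) by simp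
        then show ?thesis using step_Am yj yj1 by simp
      qed
    qed
  qed
  moreover have "ys (T + n) = 0" using ysT[of n] Zrun_zero[OF sx eqd zT] by simp
  ultimately show ?thesis by blast
qed

lemma main:
  assumes sx: "supp n x0"
  shows "\<exists>xs. xs 0 = x0 \<and> (\<forall>j<(n + 1) * n. step n al cc j (xs j) (xs (Suc j))) \<and> xs ((n + 1) * n) = 0"
proof -
  define D where "D j = fv.dim (W x0 (j * n))" for j
  have Dmono: "D j \<le> D (Suc j)" for j using dim_mono[OF sx, of "j * n" "Suc j * n"] by (simp add: D_def)
  have Dle: "D j \<le> n" for j using W_dim_le[OF sx] by (simp add: D_def)
  have "\<exists>j\<le>n. D (Suc j) = D j"
  proof (rule ccontr)
    assume na: "\<not> (\<exists>j\<le>n. D (Suc j) = D j)"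
    have lt: "D j < D (Suc j)" if "j \<le> n" for j using Dmono[of j] na that by force
    have ge: "j \<le> D j" if "j \<le> Suc n" for j
      using that
    proof (induction j)
      case 0 then show ?case by simp
    next
      case (Suc j)
      then have "j \<le> D j" "D j < D (Suc j)" using lt by simp_all
      then show ?case by simp
    qed
    have "Suc n \<le> D (Suc n)" using ge by simp
    then show False using Dle[of "Suc n"] by simp
  qed
  then obtain j where j: "j \<le> n" "D (Suc j) = D j" by blast
  define T where "T = j * n"
  have eqd: "fv.dim (W x0 (T + n)) = fv.dim (W x0 T)"
    using j(2) by (simp add: D_def T_def add.commute)
  obtain xs where xs: "xs 0 = x0" "\<forall>k<T + n. step n al cc k (xs k) (xs (Suc k))" "xs (T + n) = 0"
    using key[OF sx eqd] by blast
  have Tn: "T + n \<le> (n + 1) * n"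
  proof -
    have "T + n = Suc j * n" by (simp add: T_def)
    also have "\<dots> \<le> (n + 1) * n" using j(1) by (intro mult_le_mono1) simp
    finally show ?thesis .
  qed
  define ys where "ys k = (if k \<le> T + n then xs k else 0)" for k
  have st0: "step n al cc k 0 0" for k
    unfolding step_def by (intro exI[of _ 0]) simp
  have "ys 0 = x0" using xs(1) by (simp add: ys_def)
  moreover have "\<forall>k<(n + 1) * n. step n al cc k (ys k) (ys (Suc k))"
  proof (intro allI impI)
    fix k assume "k < (n + 1) * n"
    show "step n al cc k (ys k) (ys (Suc k))"
    proof (cases "k < T + n")
      case True then show ?thesis using xs(2) by (simp add: ys_def)
    next
      case False
      have "ys k = 0" using False xs(3) by (cases "k = T + n") (simp_all add: ys_def)
      moreover have "ys (Suc k) = 0" using False by (simp add: ys_def)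
      ultimately show ?thesis using st0 by simp
    qed
  qed
  moreover have "ys ((n + 1) * n) = 0"
  proof (cases "(n + 1) * n = T + n")
    case True then show ?thesis using xs(3) by (simp only: ys_def True if_True order_refl)
  next
    case False then show ?thesis using Tn by (simp add: ys_def)
  qed
  ultimately show ?thesis by blast
qed

end


lemma ccf_mult:
  assumes cf: "ccf n A b" and n1: "1 \<le> n"
  shows "A *\<^sub>v vec n z = vec n (Sh n z + sc (dot n (\<lambda>j. A $$ (n - 1, j)) z) (en n))"
proof (rule eq_vecI)
  have Ac: "A \<in> carrier_mat n n" and rows: "\<forall>i<n - 1. \<forall>j<n. A $$ (i, j) = (if j = i + 1 then 1 else 0)"
    using cf unfolding ccf_def by auto
  show "dim_vec (A *\<^sub>v vec n z) = dim_vec (vec n (Sh n z + sc (dot n (\<lambda>j. A $$ (n - 1, j)) z) (en n)))"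
    using Ac by simp
  fix i assume "i < dim_vec (vec n (Sh n z + sc (dot n (\<lambda>j. A $$ (n - 1, j)) z) (en n)))"
  then have i: "i < n" by simp
  have lhs: "(A *\<^sub>v vec n z) $ i = (\<Sum>j<n. A $$ (i, j) * z j)"
    using Ac i by (simp add: scalar_prod_def atLeast0LessThan)
  have rhs: "vec n (Sh n z + sc (dot n (\<lambda>j. A $$ (n - 1, j)) z) (en n)) $ i
        = Sh n z i + dot n (\<lambda>j. A $$ (n - 1, j)) z * en n i"
    using i by (simp add: plus_fun_apply sc_apply)
  show "(A *\<^sub>v vec n z) $ i = vec n (Sh n z + sc (dot n (\<lambda>j. A $$ (n - 1, j)) z) (en n)) $ i"
  proof (cases "i < n - 1")
    case True
    have "(\<Sum>j<n. A $$ (i, j) * z j) = (\<Sum>j<n. if j = i + 1 then z j else 0)"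
      using rows True by (intro sum.cong) auto
    also have "\<dots> = z (i + 1)" using True by (simp add: sum.delta)
    finally show ?thesis using lhs rhs True by (simp add: Sh_def en_def)
  next
    case False
    then have ii: "i = n - 1" using i by simp
    have "(\<Sum>j<n. A $$ (i, j) * z j) = dot n (\<lambda>j. A $$ (n - 1, j)) z" using ii by (simp add: dot_def)
    then show ?thesis using lhs rhs ii n1 by (simp add: Sh_def en_def)
  qed
qed

lemma scalar_vec: assumes "c \<in> carrier_vec n" shows "c \<bullet> vec n z = dot n (\<lambda>j. c $ j) z"
  by (simp add: scalar_prod_def dot_def atLeast0LessThan)

lemma unit_en: "unit_vec n (n - 1) = vec n (en n)"
  by (simp add: unit_vec_def en_def)

lemma traj_ol:
  assumes cf: "\<forall>k. ccf n (A k) (b k)" and n1: "1 \<le> n"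
  shows "traj A b (int T) (vec n w) (\<lambda>_. 0) j = vec n (ol n (\<lambda>k i. A (int k) $$ (n - 1, i)) T w j)"
proof (induction j)
  case 0 then show ?case by simp
next
  case (Suc j)
  have bc: "b (int T + int j) \<in> carrier_vec n" using cf unfolding ccf_def by auto
  have "traj A b (int T) (vec n w) (\<lambda>_. 0) (Suc j)
        = A (int (T + j)) *\<^sub>v vec n (ol n (\<lambda>k i. A (int k) $$ (n - 1, i)) T w j) + 0 \<cdot>\<^sub>v b (int T + int j)"
    using Suc by simp
  also have "\<dots> = A (int (T + j)) *\<^sub>v vec n (ol n (\<lambda>k i. A (int k) $$ (n - 1, i)) T w j)"
  proof -
    have "A (int (T + j)) \<in> carrier_mat n n" using cf unfolding ccf_def by blast
    then show ?thesis using bc by (intro eq_vecI) auto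
  qed
  also have "\<dots> = vec n (ol n (\<lambda>k i. A (int k) $$ (n - 1, i)) T w (Suc j))"
    using ccf_mult[OF cf[rule_format, of "int (T + j)"] n1] by (simp add: Am_def)
  finally show ?case .
qed

lemma ol_zero: "ol n al T 0 j = 0"
  by (induction j) simp_all

lemma obs_tr:
  assumes cf: "\<forall>k. ccf n (A k) (b k)" and cc: "\<forall>k. c k \<in> carrier_vec n"
    and co: "completely_observable n A b c" and n1: "1 \<le> n"
    and sz: "supp n z"
    and out: "\<And>j. j < n \<Longrightarrow> dot n (\<lambda>i. c (int (T + j)) $ i) (ol n (\<lambda>k i. A (int k) $$ (n - 1, i)) T z j) = 0"
  shows "z = 0"
proof -
  let ?al = "\<lambda>k i. A (int k) $$ (n - 1, i)"
  have o1: "c (int T + int j) \<bullet> traj A b (int T) (vec n z) (\<lambda>_. 0) j = 0" if "j < n" for j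
    using out[OF that] traj_ol[OF cf n1, of T z j] scalar_vec[OF cc[rule_format]] by simp
  have o2: "c (int T + int j) \<bullet> traj A b (int T) (vec n 0) (\<lambda>_. 0) j = 0" for j
    using traj_ol[OF cf n1, of T 0 j] scalar_vec[OF cc[rule_format]] by (simp add: ol_zero)
  have "vec n z = vec n (0 :: nat \<Rightarrow> real)"
    using co unfolding completely_observable_def
    by (elim allE[of _ "int T"] allE[of _ "\<lambda>_. 0"] allE[of _ "vec n z"] allE[of _ "vec n 0"])
       (use o1 o2 in simp)
  then have "z i = 0" if "i < n" for i
    using that by (metis index_vec zero_fun_apply)
  then show ?thesis using sz by (simp add: fun_eq_iff supp_def zero_fun_apply) (metis not_le)
qed



lemma cl_tr:
  assumes cf: "\<forall>k. ccf n (A k) (b k)" and cc: "\<forall>k. c k \<in> carrier_vec n" and n1: "1 \<le> n"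
    and x0: "x0 \<in> carrier_vec n"
    and xs0: "xs 0 = (\<lambda>i. if i < n then x0 $ i else 0)"
    and steps: "\<forall>j<N. step n (\<lambda>k i. A (int k) $$ (n - 1, i)) (\<lambda>k i. c (int k) $ i) j (xs j) (xs (Suc j))"
    and Fdef: "F = (\<lambda>k. if dot n (\<lambda>i. c (int k) $ i) (xs k) = 0 then 0
          else (xs (Suc k) (n - 1) - dot n (\<lambda>i. A (int k) $$ (n - 1, i)) (xs k)) / dot n (\<lambda>i. c (int k) $ i) (xs k))"
  shows "k \<le> N \<Longrightarrow> closed_loop A b c F x0 k = vec n (xs k)"
proof (induction k)
  case 0
  show ?case using x0 xs0 by (intro eq_vecI) auto
next
  case (Suc k)
  let ?al = "\<lambda>i. A (int k) $$ (n - 1, i)"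
  let ?c = "\<lambda>i. c (int k) $ i"
  let ?y = "dot n ?c (xs k)"
  have IH: "closed_loop A b c F x0 k = vec n (xs k)" using Suc by simp
  have k: "k < N" using Suc by simp
  obtain v where v: "xs (Suc k) = Sh n (xs k) + sc v (en n)" "?y = 0 \<longrightarrow> v = dot n ?al (xs k)"
    using steps k unfolding step_def by blast
  have vlast: "xs (Suc k) (n - 1) = v"
    using v(1) n1 by (simp add: plus_fun_apply sc_apply Sh_def en_def)
  have key: "dot n ?al (xs k) + F k * ?y = v"
  proof (cases "?y = 0")
    case True then show ?thesis using v(2) Fdef by simp
  next
    case False then show ?thesis using vlast Fdef by (simp add: field_simps)
  qed
  have "b (int k) = unit_vec n (n - 1)" using cf unfolding ccf_def by blast
  then have bk: "b (int k) = vec n (en n)" by (simp only: unit_en)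
  have Am: "A (int k) *\<^sub>v vec n (xs k) = vec n (Sh n (xs k) + sc (dot n ?al (xs k)) (en n))"
    using ccf_mult[OF cf[rule_format, of "int k"] n1] .
  have "closed_loop A b c F x0 (Suc k)
      = A (int k) *\<^sub>v vec n (xs k) + (F k * (c (int k) \<bullet> vec n (xs k))) \<cdot>\<^sub>v b (int k)"
    using IH by simp
  also have "\<dots> = vec n (Sh n (xs k) + sc (dot n ?al (xs k)) (en n)) + (F k * ?y) \<cdot>\<^sub>v vec n (en n)"
    using Am bk scalar_vec[OF cc[rule_format, of "int k"]] by simp
  also have "\<dots> = vec n (Sh n (xs k) + sc (dot n ?al (xs k) + F k * ?y) (en n))"
    by (intro eq_vecI) (simp_all add: plus_fun_apply sc_apply algebra_simps)
  also have "\<dots> = vec n (xs (Suc k))" using key v(1) by simp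
  finally show ?case .
qed

theorem proposition5:
  fixes n :: nat and A :: "int \<Rightarrow> real mat" and b c :: "int \<Rightarrow> real vec"
  assumes "n \<ge> 1"
    and "\<forall>k. ccf n (A k) (b k)"
    and "\<forall>k. c k \<in> carrier_vec n"
    and "completely_observable n A b c"
    and "\<forall>k::nat. c (int k) $ 0 \<noteq> 0"
  shows "\<exists>N::nat. \<forall>x0 \<in> carrier_vec n. \<exists>F :: nat \<Rightarrow> real. closed_loop A b c F x0 N = 0\<^sub>v n"
proof -
  define al where "al = (\<lambda>k i. A (int k) $$ (n - 1, i))"
  define cc where "cc = (\<lambda>k i. c (int k) $ i)"
  have n1: "1 \<le> n" using assms(1) by simp
  interpret S: sysl n al cc
  proof
    show "1 \<le> n" by (rule n1)
  next
    fix k show "cc k 0 \<noteq> 0" using assms(5) by (simp add: cc_def)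
  next
    fix T z assume sz: "supp n z" and out: "\<And>j. j < n \<Longrightarrow> dot n (cc (T + j)) (ol n al T z j) = 0"
    show "z = 0"
    proof (rule obs_tr[OF assms(2) assms(3) assms(4) n1 sz, of T])
      fix j assume "j < n"
      then show "dot n (\<lambda>i. c (int (T + j)) $ i) (ol n (\<lambda>k i. A (int k) $$ (n - 1, i)) T z j) = 0"
        using out[of j] by (simp add: al_def cc_def)
    qed
  qed
  show ?thesis
  proof (intro exI[of _ "(n + 1) * n"] ballI)
    fix x0 :: "real vec" assume x0: "x0 \<in> carrier_vec n"
    define z0 where "z0 = (\<lambda>i. if i < n then x0 $ i else (0::real))"
    have sz0: "supp n z0" by (simp add: supp_def z0_def)
    obtain xs where xs: "xs 0 = z0" "\<forall>j<(n + 1) * n. step n al cc j (xs j) (xs (Suc j))" "xs ((n + 1) * n) = 0"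
      using S.main[OF sz0] by blast
    define F where "F = (\<lambda>k. if dot n (\<lambda>i. c (int k) $ i) (xs k) = 0 then 0
          else (xs (Suc k) (n - 1) - dot n (\<lambda>i. A (int k) $$ (n - 1, i)) (xs k)) / dot n (\<lambda>i. c (int k) $ i) (xs k))"
    have "closed_loop A b c F x0 ((n + 1) * n) = vec n (xs ((n + 1) * n))"
      using cl_tr[OF assms(2) assms(3) n1 x0, of xs "(n + 1) * n" F] xs(1,2) z0_def F_def
      unfolding al_def cc_def by blast
    also have "\<dots> = 0\<^sub>v n" using xs(3) by (intro eq_vecI) (simp_all add: zero_fun_apply)
    finally show "\<exists>F. closed_loop A b c F x0 ((n + 1) * n) = 0\<^sub>v n" by blast
  qed
qed


end
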